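(* Let $s\ge r\ge2$, let $Q$ be an $s$-vertex $r$-graph and let $\mathcal P$ be a $Q$-flat hereditary property of $r$-graphs. Then for every $p\ge1$ and every $H\in\mathcal P$ with at least $s$ vertices, $$\lambda^{(p)}(Q,H)\le\pi(Q,\mathcal P)^{1/p}\big(s!\,\mathcal N(Q,H)\big)^{1-1/p}.$$
   Context: An $r$-graph ($r\ge 2$) is a finite hypergraph all of whose edges have exactly $r$ vertices. For $I\subseteq V(H)$, $H[I]$ denotes the induced subhypergraph on $I$. For an $s$-vertex $r$-graph $Q$ and an $r$-graph $H$, $\mathcal N(Q,H)$ is the number of (not necessarily induced) subgraphs of $H$ isomorphic to $Q$. For an $n$-vertex $r$-graph $H$ with vertex set $[n]$ and $\mathbf x\in\mathbb R^n$, $P_{Q,H}(\mathbf x)=s!\sum_{\{i_1,\dots,i_s\}\in\binom{[n]}{s}}\mathcal N(Q,H[\{i_1,\dots,i_s\}])\,x_{i_1}\cdots x_{i_s}$, and for $p\ge1$, $\lambda^{(p)}(Q,H)=\max_{\|\mathbf x\|_p=1}P_{Q,H}(\mathbf x)$. A hereditary property $\mathcal P$ of $r$-graphs is a family of $r$-graphs closed under isomorphism and under taking induced subgraphs; as a standing assumption, whenever $H\in\mathcal P$, the disjoint union of $H$ with an isolated vertex is also in $\mathcal P$. $\mathcal P_n$ is the set of members of $\mathcal P$ with $n$ vertices. $ex(Q,\mathcal P_n)=\max\{\mathcal N(Q,H):H\in\mathcal P_n\}$ and $\pi(Q,\mathcal P)=\lim_{n\to\infty}ex(Q,\mathcal P_n)/\binom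 ns$ (this limit exists). $\lambda^{(p)}(Q,\mathcal P_n)=\max\{\lambda^{(p)}(Q,H):H\in\mathcal P_n\}$ and $\lambda^{(p)}(Q,\mathcal P)=\lim_{n\to\infty}\lambda^{(p)}(Q,\mathcal P_n)n^{s/p-s}$ (this limit exists). $\mathcal P$ is $Q$-flat if $\lambda^{(1)}(Q,\mathcal P)=\pi(Q,\mathcal P)$. *)

theory Defs
  imports Complex_Main
begin

text \<open>Hypergraphs with vertices in nat: a pair (vertex set, edge set).
Every finite hypergraph is isomorphic to one of this form.\<close>
type_synonym hg = "nat set \<times> nat set set"

definition verts :: "hg \<Rightarrow> nat set" where "verts H = fst H"
definition edges :: "hg \<Rightarrow> nat set set" where "edges H = snd H"

definition rgraph :: "nat \<Rightarrow> hg \<Rightarrow> bool" where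
  "rgraph r H \<longleftrightarrow> finite (verts H) \<and> (\<forall>e\<in>edges H. e \<subseteq> verts H \<and> card e = r)"

definition hg_iso :: "hg \<Rightarrow> hg \<Rightarrow> bool" where
  "hg_iso G H \<longleftrightarrow> (\<exists>f. bij_betw f (verts G) (verts H) \<and>
      (\<forall>e. e \<subseteq> verts G \<longrightarrow> (e \<in> edges G \<longleftrightarrow> f ` e \<in> edges H)))"

definition induced :: "hg \<Rightarrow> nat set \<Rightarrow> hg" where
  "induced H I = (I, {e \<in> edges H. e \<subseteq> I})"

definition copies :: "hg \<Rightarrow> hg \<Rightarrow> nat" where
  "copies Q H = card {(W, F). W \<subseteq> verts H \<and> F \<subseteq> edges H \<and> (\<forall>e\<in>F. e \<subseteq> W)
                              \<and> hg_iso (W, F) Q}"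

definition polyQ :: "hg \<Rightarrow> hg \<Rightarrow> (nat \<Rightarrow> real) \<Rightarrow> real" where
  "polyQ Q H x = fact (card (verts Q)) *
     (\<Sum>I\<in>{I. I \<subseteq> verts H \<and> card I = card (verts Q)}.
        real (copies Q (induced H I)) * (\<Prod>i\<in>I. x i))"

definition lagr :: "real \<Rightarrow> hg \<Rightarrow> hg \<Rightarrow> real" where
  "lagr p Q H = Sup {polyQ Q H x | x. (\<Sum>i\<in>verts H. \<bar>x i\<bar> powr p) powr (1 / p) = 1}"

definition hereditary :: "nat \<Rightarrow> hg set \<Rightarrow> bool" where
  "hereditary r P \<longleftrightarrow>
     (\<forall>H\<in>P. rgraph r H) \<and>
     (\<forall>G H. H \<in> P \<longrightarrow> rgraph r G \<longrightarrow> hg_iso G H \<longrightarrow> G \<in> P) \<and>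
     (\<forall>H\<in>P. \<forall>I. I \<subseteq> verts H \<longrightarrow> induced H I \<in> P) \<and>
     (\<forall>H\<in>P. \<forall>v. v \<notin> verts H \<longrightarrow> (insert v (verts H), edges H) \<in> P)"

definition Pn :: "hg set \<Rightarrow> nat \<Rightarrow> hg set" where
  "Pn P n = {H \<in> P. card (verts H) = n}"

definition exQ :: "hg \<Rightarrow> hg set \<Rightarrow> nat \<Rightarrow> real" where
  "exQ Q P n = Sup ((\<lambda>H. real (copies Q H)) ` Pn P n)"

definition piQ :: "hg \<Rightarrow> hg set \<Rightarrow> real" where
  "piQ Q P = lim (\<lambda>n. exQ Q P n / real (n choose card (verts Q)))"

definition lagrPn :: "real \<Rightarrow> hg \<Rightarrow> hg set \<Rightarrow> nat \<Rightarrow> real" where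
  "lagrPn p Q P n = Sup (lagr p Q ` Pn P n)"

definition lagrP :: "real \<Rightarrow> hg \<Rightarrow> hg set \<Rightarrow> real" where
  "lagrP p Q P = lim (\<lambda>n. lagrPn p Q P n *
      real n powr (real (card (verts Q)) / p - real (card (verts Q))))"

definition flat :: "hg \<Rightarrow> hg set \<Rightarrow> bool" where
  "flat Q P \<longleftrightarrow> lagrP 1 Q P = piQ Q P"

end

theory Submission
  imports Defs "HOL-Analysis.Convex"
begin

definition copyset :: "hg \<Rightarrow> hg \<Rightarrow> hg set" where
  "copyset Q H = {(W, F). W \<subseteq> verts H \<and> F \<subseteq> edges H \<and> (\<forall>e\<in>F. e \<subseteq> W) \<and> hg_iso (W, F) Q}"

lemma copies_eq: "copies Q H = card (copyset Q H)"
  unfolding copies_def copyset_def by simp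

lemma iso_card:
  assumes "hg_iso (W, F) Q" "finite (verts Q)"
  shows "finite W \<and> card W = card (verts Q)"
proof -
  obtain f where "bij_betw f W (verts Q)" using assms(1) unfolding hg_iso_def verts_def by auto
  then show ?thesis using assms(2) bij_betw_finite bij_betw_same_card by blast
qed

lemma copyset_induced:
  assumes "finite (verts Q)" "finite I" "card I = card (verts Q)"
  shows "copyset Q (induced H I) = {(W,F) \<in> copyset Q H. W = I} \<or> \<not> I \<subseteq> verts H"
proof (cases "I \<subseteq> verts H")
  case True
  have "copyset Q (induced H I) \<subseteq> {(W,F) \<in> copyset Q H. W = I}"
  proof
    fix z assume z: "z \<in> copyset Q (induced H I)"
    obtain W F where zz: "z = (W,F)" by fastforce
    have "W \<subseteq> I" "F \<subseteq> edges H" "hg_iso (W,F) Q" "\<forall>e\<in>F. e \<subseteq> W"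
      using z zz unfolding copyset_def induced_def verts_def edges_def by auto
    moreover have "W = I" using iso_card[OF \<open>hg_iso (W,F) Q\<close> assms(1)] assms \<open>W \<subseteq> I\<close>
      by (metis card_subset_eq)
    ultimately show "z \<in> {(W,F) \<in> copyset Q H. W = I}" using zz True unfolding copyset_def by auto
  qed
  moreover have "{(W,F) \<in> copyset Q H. W = I} \<subseteq> copyset Q (induced H I)"
    unfolding copyset_def induced_def verts_def edges_def by auto
  ultimately show ?thesis by blast
qed simp

lemma finite_copyset:
  assumes "rgraph r H"
  shows "finite (copyset Q H)"
proof -
  have fe: "finite (edges H)" using assms unfolding rgraph_def
    by (meson PowI finite_Pow_iff rev_finite_subset subsetI)
  have "copyset Q H \<subseteq> Pow (verts H) \<times> Pow (edges H)" unfolding copyset_def by auto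
  then show ?thesis using fe assms unfolding rgraph_def by (meson finite_Pow_iff finite_SigmaI rev_finite_subset)
qed

lemma sum_copies_le:
  assumes "rgraph r H" "finite (verts Q)"
  shows "(\<Sum>I\<in>{I. I \<subseteq> verts H \<and> card I = card (verts Q)}. copies Q (induced H I)) \<le> copies Q H"
proof -
  let ?S = "{I. I \<subseteq> verts H \<and> card I = card (verts Q)}"
  let ?T = "\<lambda>I. {(W,F) \<in> copyset Q H. W = I}"
  have fV: "finite (verts H)" using assms unfolding rgraph_def by auto
  have fC: "finite (copyset Q H)" using finite_copyset[OF assms(1)] .
  have fS: "finite ?S" by (rule finite_subset[of _ "Pow (verts H)"]) (use fV in auto)
  have "(\<Sum>I\<in>?S. copies Q (induced H I)) = (\<Sum>I\<in>?S. card (?T I))"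
  proof (rule sum.cong)
    fix I assume "I \<in> ?S"
    then have "I \<subseteq> verts H" "finite I" "card I = card (verts Q)" using fV finite_subset by auto
    then show "copies Q (induced H I) = card (?T I)"
      using copyset_induced[OF assms(2) \<open>finite I\<close> \<open>card I = _\<close>, of H] copies_eq by simp
  qed simp
  also have "\<dots> = card (\<Union>I\<in>?S. ?T I)"
    by (rule card_UN_disjoint[symmetric]) (use fS fC in \<open>auto intro: finite_subset[OF _ fC]\<close>)
  also have "\<dots> \<le> card (copyset Q H)"
    by (rule card_mono) (use fC in auto)
  finally show ?thesis using copies_eq by simp
qed

lemma copies_induced_bound:
  assumes "finite I"
  shows "copies Q (induced H I) \<le> 2 ^ card I * 2 ^ (2 ^ card I)"
proof -
  have "copyset Q (induced H I) \<subseteq> Pow I \<times> Pow (Pow I)"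
    unfolding copyset_def induced_def verts_def edges_def by auto
  then have "card (copyset Q (induced H I)) \<le> card (Pow I \<times> Pow (Pow I))"
    by (rule card_mono[rotated]) (use assms in auto)
  then show ?thesis using assms by (simp add: copies_eq card_Pow card_cartesian_product)
qed

lemma holder_sum:
  fixes c a :: "'a \<Rightarrow> real" and p :: real
  assumes fS: "finite S" and c: "\<And>i. i \<in> S \<Longrightarrow> c i \<ge> 0" and a: "\<And>i. i \<in> S \<Longrightarrow> a i \<ge> 0"
    and p: "1 \<le> p"
  shows "(\<Sum>i\<in>S. c i * a i) \<le> (\<Sum>i\<in>S. c i * a i powr p) powr (1/p) * (\<Sum>i\<in>S. c i) powr (1 - 1/p)"
proof -
  define A where "A = (\<Sum>i\<in>S. c i * a i powr p)"
  define C where "C = (\<Sum>i\<in>S. c i)"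
  have A0: "A \<ge> 0" unfolding A_def using c a by (simp add: sum_nonneg)
  have C0: "C \<ge> 0" unfolding C_def using c by (simp add: sum_nonneg)
  have R0: "0 \<le> A powr (1/p) * C powr (1 - 1/p)" by simp
  show ?thesis
  proof (cases "C = 0")
    case True
    then have "\<forall>i\<in>S. c i = 0" using sum_nonneg_eq_0_iff[OF fS] c unfolding C_def by blast
    then show ?thesis using R0 unfolding A_def C_def by simp
  next
    case Cn: False
    then have Cp: "C > 0" using C0 by simp
    show ?thesis
    proof (cases "A = 0")
      case True
      then have "\<forall>i\<in>S. c i * a i powr p = 0" using sum_nonneg_eq_0_iff[OF fS] c a unfolding A_def
        by (meson powr_ge_zero zero_le_mult_iff)
      then have "\<forall>i\<in>S. c i * a i = 0" by simp
      then have "(\<Sum>i\<in>S. c i * a i) = 0" by (intro sum.neutral) blast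
      then show ?thesis using R0 unfolding A_def C_def by linarith
    next
      case An: False
      then have Ap: "A > 0" using A0 by simp
      show ?thesis
      proof (cases "p = 1")
        case True
        have "(\<Sum>i\<in>S. c i * a i) = A" unfolding A_def True using a by (intro sum.cong) auto
        then show ?thesis using True Cp Ap unfolding A_def C_def by simp
      next
        case False
        then have p1: "p > 1" using p by simp
        define q where "q = p / (p - 1)"
        have q1: "q > 1" unfolding q_def using p1 by simp
        have pq: "1/p + 1/q = 1" unfolding q_def using p1 by (simp add: field_simps)
        define M where "M = (A / C) powr (1/p)"
        have Mp: "M > 0" unfolding M_def using Ap Cp by simp
        have MpP: "M powr p = A / C" unfolding M_def using Ap Cp p1 by (simp add: powr_powr)
        have trm: "c i * a i \<le> M * ((c i * a i powr p) * (C / A / p) + c i * (1 - 1/p))" if i: "i \<in> S" for i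
        proof -
          have y: "a i / M \<le> (a i / M) powr p / p + 1 powr q / q"
            using Youngs_inequality[OF p1 q1 pq, of "a i / M" 1] a[OF i] Mp by simp
          have "(a i / M) powr p = a i powr p / (A / C)"
            using a[OF i] Mp MpP by (simp add: powr_divide)
          then have "a i / M \<le> a i powr p * C / A / p + (1 - 1/p)"
            using y pq by (simp add: field_simps)
          then have "a i \<le> M * (a i powr p * C / A / p + (1 - 1/p))"
            using Mp by (simp add: field_simps)
          then have "c i * a i \<le> c i * (M * (a i powr p * C / A / p + (1 - 1/p)))"
            using c[OF i] by (simp add: mult_left_mono)
          then show ?thesis by (simp add: algebra_simps)
        qed
        have "(\<Sum>i\<in>S. c i * a i) \<le> (\<Sum>i\<in>S. M * ((c i * a i powr p) * (C / A / p) + c i * (1 - 1/p)))"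
          by (rule sum_mono) (rule trm)
        also have "\<dots> = M * (A * C / A / p + C * (1 - 1/p))"
        proof -
          have "(\<Sum>i\<in>S. M * ((c i * a i powr p) * (C / A / p) + c i * (1 - 1/p)))
            = M * ((\<Sum>i\<in>S. c i * a i powr p) * (C / A / p) + (\<Sum>i\<in>S. c i) * (1 - 1/p))"
            by (simp only: distrib_left sum.distrib flip: sum_distrib_left sum_distrib_right)
          then show ?thesis unfolding A_def[symmetric] C_def[symmetric] by simp
        qed
        also have "\<dots> = M * C" using Ap p1 by (simp add: field_simps)
        also have "\<dots> = A powr (1/p) * C powr (1 - 1/p)"
          unfolding M_def using Ap Cp by (simp add: powr_divide powr_diff field_simps)
        finally show ?thesis unfolding A_def C_def .
      qed
    qed
  qed
qed

definition KB :: "hg \<Rightarrow> real" where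
  "KB Q = fact (card (verts Q)) * (2 ^ card (verts Q) * 2 ^ (2 ^ card (verts Q))) * exp 1"

lemma sphere1_iff:
  fixes V :: "nat set" and x :: "nat \<Rightarrow> real"
  shows "((\<Sum>i\<in>V. \<bar>x i\<bar> powr 1) powr (1 / 1) = 1) \<longleftrightarrow> (\<Sum>i\<in>V. \<bar>x i\<bar>) = 1"
proof -
  have "(\<Sum>i\<in>V. \<bar>x i\<bar> powr 1) = (\<Sum>i\<in>V. \<bar>x i\<bar>)" by (intro sum.cong) (simp_all add: powr_one)
  moreover have "(\<Sum>i\<in>V. \<bar>x i\<bar>) \<ge> 0" by (simp add: sum_nonneg)
  ultimately show ?thesis by simp
qed

lemma term_abs: "(c::real) \<ge> 0 \<Longrightarrow> c * (\<Prod>i\<in>I. x i) \<le> c * (\<Prod>i\<in>I. \<bar>x i\<bar>)"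
proof -
  assume c: "c \<ge> 0"
  have "c * (\<Prod>i\<in>I. x i) \<le> \<bar>c * (\<Prod>i\<in>I. x i)\<bar>" by simp
  also have "\<dots> = c * (\<Prod>i\<in>I. \<bar>x i\<bar>)" using c by (simp add: abs_mult abs_prod)
  finally show ?thesis .
qed

lemma polyQ_abs:
  "polyQ Q G x \<le> fact (card (verts Q)) *
     (\<Sum>I\<in>{I. I \<subseteq> verts G \<and> card I = card (verts Q)}.
        real (copies Q (induced G I)) * (\<Prod>i\<in>I. \<bar>x i\<bar>))"
  unfolding polyQ_def by (intro mult_left_mono sum_mono term_abs) simp_all

lemma polyQ_bound:
  assumes fV: "finite (verts G)" and x: "(\<Sum>i\<in>verts G. \<bar>x i\<bar>) = 1"
  shows "polyQ Q G x \<le> KB Q"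
proof -
  let ?s = "card (verts Q)"
  let ?K = "(2::real) ^ ?s * 2 ^ (2 ^ ?s)"
  let ?S = "{I. I \<subseteq> verts G \<and> card I = ?s}"
  have "polyQ Q G x \<le> fact ?s * (\<Sum>I\<in>?S. real (copies Q (induced G I)) * (\<Prod>i\<in>I. \<bar>x i\<bar>))"
    by (rule polyQ_abs)
  also have "\<dots> \<le> fact ?s * (\<Sum>I\<in>?S. ?K * (\<Prod>i\<in>I. \<bar>x i\<bar>))"
  proof (intro mult_left_mono sum_mono)
    fix I assume "I \<in> ?S"
    then have fI: "finite I" and cI: "card I = ?s" using fV finite_subset by auto
    have "copies Q (induced G I) \<le> 2 ^ ?s * 2 ^ (2 ^ ?s)"
      using copies_induced_bound[OF fI, of Q G] cI by simp
    then have "real (copies Q (induced G I)) \<le> ?K"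
      by (metis (mono_tags, lifting) numeral_power_eq_of_nat_cancel_iff of_nat_le_iff of_nat_mult)
    then show "real (copies Q (induced G I)) * (\<Prod>i\<in>I. \<bar>x i\<bar>) \<le> ?K * (\<Prod>i\<in>I. \<bar>x i\<bar>)"
      by (simp add: mult_right_mono prod_nonneg)
  qed simp
  also have "\<dots> \<le> fact ?s * (\<Sum>I\<in>Pow (verts G). ?K * (\<Prod>i\<in>I. \<bar>x i\<bar>))"
    by (intro mult_left_mono sum_mono2) (use fV in \<open>auto simp: prod_nonneg\<close>)
  also have "\<dots> = fact ?s * ?K * (\<Sum>I\<in>Pow (verts G). (\<Prod>i\<in>I. \<bar>x i\<bar>) * (\<Prod>i\<in>verts G - I. 1))"
    by (simp add: sum_distrib_left mult.assoc)
  also have "\<dots> = fact ?s * ?K * (\<Prod>i\<in>verts G. \<bar>x i\<bar> + 1)"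
    by (simp only: prod_add[OF fV])
  also have "\<dots> \<le> fact ?s * ?K * (\<Prod>i\<in>verts G. exp \<bar>x i\<bar>)"
    by (intro mult_left_mono prod_mono) (auto simp: add.commute exp_ge_add_one_self)
  also have "\<dots> = fact ?s * ?K * exp 1"
  proof -
    have "(\<Prod>i\<in>verts G. exp \<bar>x i\<bar>) = exp (\<Sum>i\<in>verts G. \<bar>x i\<bar>)" by (simp add: exp_sum fV)
    then show ?thesis using x by simp
  qed
  finally show ?thesis unfolding KB_def .
qed

lemma lagr1_bdd:
  assumes "finite (verts G)"
  shows "bdd_above {polyQ Q G x | x. (\<Sum>i\<in>verts G. \<bar>x i\<bar> powr 1) powr (1 / 1) = 1}"
proof (rule bdd_aboveI[of _ "KB Q"])
  fix y assume "y \<in> {polyQ Q G x | x. (\<Sum>i\<in>verts G. \<bar>x i\<bar> powr 1) powr (1 / 1) = 1}"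
  then obtain x where y: "y = polyQ Q G x" and x: "(\<Sum>i\<in>verts G. \<bar>x i\<bar> powr 1) powr (1 / 1) = 1" by blast
  have "(\<Sum>i\<in>verts G. \<bar>x i\<bar>) = 1" using x unfolding sphere1_iff .
  then show "y \<le> KB Q" using polyQ_bound[OF assms] y by simp
qed

lemma lagr1_upper:
  assumes "finite (verts G)" "(\<Sum>i\<in>verts G. \<bar>x i\<bar>) = 1"
  shows "polyQ Q G x \<le> lagr 1 Q G"
  unfolding lagr_def
proof (rule cSup_upper[OF _ lagr1_bdd[OF assms(1)]])
  have "(\<Sum>i\<in>verts G. \<bar>x i\<bar> powr 1) powr (1 / 1) = 1" unfolding sphere1_iff by (rule assms(2))
  then show "polyQ Q G x \<in> {polyQ Q G x | x. (\<Sum>i\<in>verts G. \<bar>x i\<bar> powr 1) powr (1 / 1) = 1}"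
    by (intro CollectI exI[where x=x] conjI refl)
qed

lemma lagr1_nonempty:
  assumes "v \<in> V" "finite V"
  shows "(\<Sum>i\<in>V. \<bar>(\<lambda>i. if i = v then 1 else 0) i :: real\<bar>) = 1"
  using assms by (simp add: sum.delta)

lemma lagr1_le_KB:
  assumes "finite (verts G)" "verts G \<noteq> {}"
  shows "lagr 1 Q G \<le> KB Q"
  unfolding lagr_def
proof (rule cSup_least)
  obtain v where v: "v \<in> verts G" using assms by auto
  have "(\<Sum>i\<in>verts G. \<bar>(\<lambda>i. if i = v then 1 else 0) i :: real\<bar> powr 1) powr (1 / 1) = 1"
    unfolding sphere1_iff by (rule lagr1_nonempty[OF v assms(1)])
  then have "polyQ Q G (\<lambda>i. if i = v then 1 else 0) \<in> {polyQ Q G x | x. (\<Sum>i\<in>verts G. \<bar>x i\<bar> powr 1) powr (1 / 1) = 1}"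
    by (intro CollectI exI[where x="\<lambda>i. if i = v then 1 else 0"] conjI refl)
  then show "{polyQ Q G x | x. (\<Sum>i\<in>verts G. \<bar>x i\<bar> powr 1) powr (1 / 1) = 1} \<noteq> {}"
    by (metis empty_iff)
next
  fix y assume "y \<in> {polyQ Q G x | x. (\<Sum>i\<in>verts G. \<bar>x i\<bar> powr 1) powr (1 / 1) = 1}"
  then obtain x where y: "y = polyQ Q G x" and x: "(\<Sum>i\<in>verts G. \<bar>x i\<bar> powr 1) powr (1 / 1) = 1" by blast
  have "(\<Sum>i\<in>verts G. \<bar>x i\<bar>) = 1" using x unfolding sphere1_iff .
  then show "y \<le> KB Q" using polyQ_bound[OF assms(1)] y by simp
qed

lemma polyQ_ext:
  assumes fV: "finite (verts G)" and v: "v \<notin> verts G" and s1: "card (verts Q) \<ge> 1"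
  shows "polyQ Q (insert v (verts G), edges G) (x(v := 0)) = polyQ Q G x"
proof -
  let ?G' = "(insert v (verts G), edges G)"
  let ?s = "card (verts Q)"
  let ?S = "{I. I \<subseteq> verts G \<and> card I = ?s}"
  let ?S' = "{I. I \<subseteq> insert v (verts G) \<and> card I = ?s}"
  have vG': "verts ?G' = insert v (verts G)" "edges ?G' = edges G" by (simp_all add: verts_def edges_def)
  have "(\<Sum>I\<in>?S'. real (copies Q (induced ?G' I)) * (\<Prod>i\<in>I. (x(v := 0)) i))
      = (\<Sum>I\<in>?S. real (copies Q (induced ?G' I)) * (\<Prod>i\<in>I. (x(v := 0)) i))"
  proof (rule sum.mono_neutral_right)
    show "finite ?S'" by (rule finite_subset[of _ "Pow (insert v (verts G))"]) (use fV in auto)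
    show "?S \<subseteq> ?S'" by auto
    show "\<forall>I\<in>?S' - ?S. real (copies Q (induced ?G' I)) * (\<Prod>i\<in>I. (x(v := 0)) i) = 0"
    proof
      fix I assume I: "I \<in> ?S' - ?S"
      then have "v \<in> I" by auto
      moreover have "finite I" using I s1 by (auto intro: card_ge_0_finite)
      ultimately have "(\<Prod>i\<in>I. (x(v := 0)) i) = 0"
        by (intro prod_zero) auto
      then show "real (copies Q (induced ?G' I)) * (\<Prod>i\<in>I. (x(v := 0)) i) = 0" by simp
    qed
  qed
  also have "\<dots> = (\<Sum>I\<in>?S. real (copies Q (induced G I)) * (\<Prod>i\<in>I. x i))"
  proof (rule sum.cong)
    fix I assume I: "I \<in> ?S"
    then have "v \<notin> I" using v by auto
    then have "(\<Prod>i\<in>I. (x(v := 0)) i) = (\<Prod>i\<in>I. x i)" by (intro prod.cong) auto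
    moreover have "induced ?G' I = induced G I" unfolding induced_def by (simp add: edges_def)
    ultimately show "real (copies Q (induced ?G' I)) * (\<Prod>i\<in>I. (x(v := 0)) i)
        = real (copies Q (induced G I)) * (\<Prod>i\<in>I. x i)" by simp
  qed simp
  finally show ?thesis unfolding polyQ_def vG' by simp
qed

lemma lagr1_ext:
  assumes fV: "finite (verts G)" and ne: "verts G \<noteq> {}" and v: "v \<notin> verts G" and s1: "card (verts Q) \<ge> 1"
  shows "lagr 1 Q G \<le> lagr 1 Q (insert v (verts G), edges G)"
  unfolding lagr_def[of 1 Q G]
proof (rule cSup_least)
  obtain w where w: "w \<in> verts G" using ne by auto
  have "(\<Sum>i\<in>verts G. \<bar>(\<lambda>i. if i = w then 1 else 0) i :: real\<bar> powr 1) powr (1 / 1) = 1"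
    unfolding sphere1_iff by (rule lagr1_nonempty[OF w fV])
  then have "polyQ Q G (\<lambda>i. if i = w then 1 else 0) \<in> {polyQ Q G x | x. (\<Sum>i\<in>verts G. \<bar>x i\<bar> powr 1) powr (1 / 1) = 1}"
    by (intro CollectI exI[where x="\<lambda>i. if i = w then 1 else 0"] conjI refl)
  then show "{polyQ Q G x | x. (\<Sum>i\<in>verts G. \<bar>x i\<bar> powr 1) powr (1 / 1) = 1} \<noteq> {}"
    by (metis empty_iff)
next
  fix y assume "y \<in> {polyQ Q G x | x. (\<Sum>i\<in>verts G. \<bar>x i\<bar> powr 1) powr (1 / 1) = 1}"
  then obtain x where y: "y = polyQ Q G x" and x0: "(\<Sum>i\<in>verts G. \<bar>x i\<bar> powr 1) powr (1 / 1) = 1" by blast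
  have x: "(\<Sum>i\<in>verts G. \<bar>x i\<bar>) = 1" using x0 unfolding sphere1_iff .
  have vG': "verts (insert v (verts G), edges G) = insert v (verts G)" by (simp add: verts_def)
  have "(\<Sum>i\<in>insert v (verts G). \<bar>(x(v := 0)) i\<bar>) = (\<Sum>i\<in>verts G. \<bar>x i\<bar>)"
    using fV v by (simp add: sum.insert) (intro sum.cong, auto)
  then have "polyQ Q (insert v (verts G), edges G) (x(v := 0)) \<le> lagr 1 Q (insert v (verts G), edges G)"
    by (intro lagr1_upper) (use fV x vG' in auto)
  then show "y \<le> lagr 1 Q (insert v (verts G), edges G)"
    using polyQ_ext[OF fV v s1] y by simp
qed

lemma heredE:
  assumes "hereditary r P"
  shows "\<And>G. G \<in> P \<Longrightarrow> rgraph r G"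
    and "\<And>G v. G \<in> P \<Longrightarrow> v \<notin> verts G \<Longrightarrow> (insert v (verts G), edges G) \<in> P"
  using assms unfolding hereditary_def by blast+

lemma lagr1_le_piQ:
  assumes "rgraph r Q" "hereditary r P" "flat Q P" "H \<in> P" "card (verts Q) \<ge> 1" "verts H \<noteq> {}"
  shows "lagr 1 Q H \<le> piQ Q P"
proof -
  have finG: "finite (verts G)" if "G \<in> P" for G
    using heredE(1)[OF assms(2) that] unfolding rgraph_def by blast
  define N where "N = card (verts H)"
  have N1: "N \<ge> 1" unfolding N_def using assms(6) finG[OF assms(4)] by (simp add: Suc_leI card_gt_0_iff)
  have extP: "\<exists>G'\<in>Pn P (Suc n). lagr 1 Q G \<le> lagr 1 Q G'" if G: "G \<in> Pn P n" "n \<ge> 1" for G n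
  proof -
    have GP: "G \<in> P" and cG: "card (verts G) = n" using G unfolding Pn_def by auto
    have fG: "finite (verts G)" using finG[OF GP] .
    obtain v where v: "v \<notin> verts G" using ex_new_if_finite[OF infinite_UNIV_nat fG] by blast
    let ?G' = "(insert v (verts G), edges G)"
    have "?G' \<in> P" using heredE(2)[OF assms(2) GP v] .
    moreover have "card (verts ?G') = Suc n" using fG v cG by (simp add: verts_def)
    moreover have "verts G \<noteq> {}" using cG G(2) by auto
    ultimately show ?thesis using lagr1_ext[OF fG _ v assms(5)] unfolding Pn_def by auto
  qed
  have ne: "Pn P n \<noteq> {}" if "n \<ge> N" for n
    using that
  proof (induction n rule: dec_induct)
    case base
    have "H \<in> Pn P N" using assms(4) unfolding Pn_def N_def by simp
    then show ?case by blast
  next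
    case (step n)
    then obtain G where "G \<in> Pn P n" by auto
    then show ?case using extP[of G n] step N1 by auto
  qed
  have bdd: "bdd_above (lagr 1 Q ` Pn P n)" if "n \<ge> 1" for n
  proof (rule bdd_aboveI[of _ "KB Q"])
    fix y assume "y \<in> lagr 1 Q ` Pn P n"
    then obtain G where G: "G \<in> Pn P n" "y = lagr 1 Q G" by auto
    then have "G \<in> P" "card (verts G) = n" unfolding Pn_def by auto
    then show "y \<le> KB Q" using lagr1_le_KB[OF finG] G that by fastforce
  qed
  have mono: "lagrPn 1 Q P n \<le> lagrPn 1 Q P (Suc n)" if "n \<ge> N" for n
    unfolding lagrPn_def
  proof (rule cSup_least)
    show "lagr 1 Q ` Pn P n \<noteq> {}" using ne[OF that] by auto
  next
    fix y assume "y \<in> lagr 1 Q ` Pn P n"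
    then obtain G where G: "G \<in> Pn P n" "y = lagr 1 Q G" by auto
    have n1: "n \<ge> 1" using that N1 by simp
    obtain G' where G': "G' \<in> Pn P (Suc n)" "lagr 1 Q G \<le> lagr 1 Q G'" using extP[OF G(1) n1] by blast
    have "lagr 1 Q G' \<le> Sup (lagr 1 Q ` Pn P (Suc n))"
      by (rule cSup_upper) (use G' bdd in auto)
    then show "y \<le> Sup (lagr 1 Q ` Pn P (Suc n))" using G G' by simp
  qed
  have bddK: "lagrPn 1 Q P n \<le> KB Q" if "n \<ge> N" for n
    unfolding lagrPn_def
  proof (rule cSup_least)
    show "lagr 1 Q ` Pn P n \<noteq> {}" using ne[OF that] by auto
  next
    fix y assume "y \<in> lagr 1 Q ` Pn P n"
    then obtain G where G: "G \<in> Pn P n" "y = lagr 1 Q G" by auto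
    then have "G \<in> P" "card (verts G) = n" unfolding Pn_def by auto
    then show "y \<le> KB Q" using lagr1_le_KB[OF finG] G that N1 by fastforce
  qed
  define f where "f n = lagrPn 1 Q P n * real n powr (real (card (verts Q)) / 1 - real (card (verts Q)))" for n
  have fe: "f n = lagrPn 1 Q P n" if "n \<ge> 1" for n using that unfolding f_def by simp
  define g where "g k = f (k + N)" for k
  have "incseq g" unfolding g_def
    by (rule incseq_SucI) (use mono fe N1 in simp)
  moreover have "\<forall>k. g k \<le> KB Q" unfolding g_def using bddK fe N1 by simp
  ultimately obtain L where L: "g \<longlonglongrightarrow> L" "\<forall>k. g k \<le> L" by (rule incseq_convergent)
  have "f \<longlonglongrightarrow> L" using L(1) unfolding g_def by (rule LIMSEQ_offset)
  then have "lagrP 1 Q P = L" unfolding lagrP_def f_def[abs_def] by (rule limI)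
  then have piL: "piQ Q P = L" using assms(3) unfolding flat_def by simp
  have "lagr 1 Q H \<le> lagrPn 1 Q P N"
    unfolding lagrPn_def by (rule cSup_upper) (use assms(4) bdd N1 in \<open>auto simp: Pn_def N_def\<close>)
  also have "\<dots> = g 0" unfolding g_def using fe N1 by simp
  also have "\<dots> \<le> L" using L(2) by simp
  finally show ?thesis using piL by simp
qed

theorem lemma3p13:
  fixes r s :: nat and Q :: hg and P :: "hg set" and p :: real and H :: hg
  assumes "2 \<le> r" and "r \<le> s"
    and "rgraph r Q" and "card (verts Q) = s"
    and "hereditary r P" and "flat Q P"
    and "1 \<le> p"
    and "H \<in> P" and "s \<le> card (verts H)"
  shows "lagr p Q H \<le> piQ Q P powr (1 / p) * (fact s * real (copies Q H)) powr (1 - 1 / p)"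
proof -
  have rH: "rgraph r H" using heredE(1)[OF assms(5,8)] .
  have fV: "finite (verts H)" using rH unfolding rgraph_def by blast
  have fQ: "finite (verts Q)" using assms(3) unfolding rgraph_def by blast
  have s1: "card (verts Q) \<ge> 1" using assms(1,2,4) by simp
  have neV: "verts H \<noteq> {}" using assms(1,2,9) by auto
  have lp: "lagr 1 Q H \<le> piQ Q P" by (rule lagr1_le_piQ[OF assms(3,5,6,8) s1 neV])
  have p0: "p > 0" using assms(7) by simp
  let ?S = "{I. I \<subseteq> verts H \<and> card I = s}"
  let ?X = "{polyQ Q H x | x. (\<Sum>i\<in>verts H. \<bar>x i\<bar> powr p) powr (1 / p) = 1}"
  show ?thesis unfolding lagr_def
  proof (rule cSup_least)
    obtain v where v: "v \<in> verts H" using neV by auto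
    have "(\<Sum>i\<in>verts H. \<bar>(\<lambda>i. if i = v then 1 else 0) i :: real\<bar> powr p) = 1"
    proof -
      have "(\<Sum>i\<in>verts H. \<bar>(\<lambda>i. if i = v then 1 else 0) i :: real\<bar> powr p) = (\<Sum>i\<in>verts H. if i = v then 1 else (0::real))"
        by (intro sum.cong) auto
      then show ?thesis using v fV by simp
    qed
    then have "(\<Sum>i\<in>verts H. \<bar>(\<lambda>i. if i = v then 1 else 0) i :: real\<bar> powr p) powr (1 / p) = 1" by simp
    then have "polyQ Q H (\<lambda>i. if i = v then 1 else 0) \<in> ?X"
      by (intro CollectI exI[where x="\<lambda>i. if i = v then 1 else 0"] conjI refl)
    then show "?X \<noteq> {}" by (metis empty_iff)
  next
    fix z assume "z \<in> ?X"
    then obtain x where z: "z = polyQ Q H x" and x0: "(\<Sum>i\<in>verts H. \<bar>x i\<bar> powr p) powr (1 / p) = 1"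
      by blast
    define T where "T = (\<Sum>i\<in>verts H. \<bar>x i\<bar> powr p)"
    have T0: "T \<ge> 0" unfolding T_def by (simp add: sum_nonneg)
    have T1: "T = 1"
    proof -
      have "T \<noteq> 0" using x0 unfolding T_def[symmetric] by auto
      then have "T = (T powr (1/p)) powr p" using T0 p0 by (simp add: powr_powr)
      then show ?thesis using x0 unfolding T_def[symmetric] by simp
    qed
    define c where "c I = fact s * real (copies Q (induced H I))" for I
    define a where "a I = (\<Prod>i\<in>I. \<bar>x i\<bar>)" for I
    define y where "y i = \<bar>x i\<bar> powr p" for i
    have fS: "finite ?S" by (rule finite_subset[of _ "Pow (verts H)"]) (use fV in auto)
    have "z \<le> fact s * (\<Sum>I\<in>?S. real (copies Q (induced H I)) * (\<Prod>i\<in>I. \<bar>x i\<bar>))"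
      using polyQ_abs[of Q H x] z assms(4) by simp
    also have "\<dots> = (\<Sum>I\<in>?S. c I * a I)"
      unfolding c_def a_def by (simp add: sum_distrib_left mult.assoc)
    also have "\<dots> \<le> (\<Sum>I\<in>?S. c I * a I powr p) powr (1/p) * (\<Sum>I\<in>?S. c I) powr (1 - 1/p)"
      by (rule holder_sum[OF fS _ _ assms(7)]) (auto simp: c_def a_def prod_nonneg)
    also have "\<dots> \<le> piQ Q P powr (1/p) * (fact s * real (copies Q H)) powr (1 - 1/p)"
    proof (rule mult_mono)
      have "(\<Sum>I\<in>?S. c I * a I powr p) = polyQ Q H y"
        unfolding polyQ_def c_def a_def y_def assms(4)
        by (simp add: sum_distrib_left mult.assoc prod_powr_distrib)
      also have "\<dots> \<le> lagr 1 Q H"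
      proof (rule lagr1_upper[OF fV])
        show "(\<Sum>i\<in>verts H. \<bar>y i\<bar>) = 1" using T1 unfolding T_def y_def by simp
      qed
      also have "\<dots> \<le> piQ Q P" by (rule lp)
      finally have "(\<Sum>I\<in>?S. c I * a I powr p) \<le> piQ Q P" .
      moreover have "(\<Sum>I\<in>?S. c I * a I powr p) \<ge> 0" unfolding c_def by (simp add: sum_nonneg)
      ultimately show "(\<Sum>I\<in>?S. c I * a I powr p) powr (1/p) \<le> piQ Q P powr (1/p)"
        using p0 by (intro powr_mono2) auto
    next
      have "(\<Sum>I\<in>?S. c I) = fact s * real (\<Sum>I\<in>?S. copies Q (induced H I))"
        unfolding c_def by (simp add: sum_distrib_left)
      also have "\<dots> \<le> fact s * real (copies Q H)"
      proof -
        have h: "(\<Sum>I\<in>?S. copies Q (induced H I)) \<le> copies Q H" using sum_copies_le[OF rH fQ] assms(4) by simp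
        have "real (\<Sum>I\<in>?S. copies Q (induced H I)) \<le> real (copies Q H)"
          using h by (simp only: of_nat_le_iff)
        then show ?thesis by (intro mult_left_mono) auto
      qed
      finally have "(\<Sum>I\<in>?S. c I) \<le> fact s * real (copies Q H)" .
      moreover have "(\<Sum>I\<in>?S. c I) \<ge> 0" unfolding c_def by (simp add: sum_nonneg)
      ultimately show "(\<Sum>I\<in>?S. c I) powr (1 - 1/p) \<le> (fact s * real (copies Q H)) powr (1 - 1/p)"
        using assms(7) by (intro powr_mono2) (auto simp: field_simps)
    qed simp_all
    finally show "z \<le> piQ Q P powr (1/p) * (fact s * real (copies Q H)) powr (1 - 1/p)" .
  qed
qed

end
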